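(* Let $\lambda\in\mathbb R$ and $G_\lambda(x)=\frac{x^3}{8} - \frac{\lambda x^2}{2} + \frac{\lambda^2 x}{2}$. For $a\ge 1\vee 3\lambda$ and any constant $r\ge 0$, \[\int_a^\infty y^{r} e^{-G_\lambda(y)}\, dy = \frac{a^{r}}{G_\lambda'(a)}e^{-G_\lambda(a)}\Big(1 + O\big(\tfrac{1}{a^3}\big)\Big),\] where the implied constant depends only on $r$.
   Context: $G'_\lambda$ is the derivative of $G_\lambda$; $x\vee y=\max(x,y)$. $f=g(1+O(h))$ means $|f-g|\le C|g|h$. *)

theory Defs
  imports "HOL-Analysis.Analysis"
begin

definition G :: "real \<Rightarrow> real \<Rightarrow> real" where
  "G lam x = x ^ 3 / 8 - lam * x ^ 2 / 2 + lam ^ 2 * x / 2"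

end

theory Submission
  imports Defs "HOL-Real_Asymp.Real_Asymp"
begin


definition Gd :: "real \<Rightarrow> real \<Rightarrow> real" where
  "Gd lam x = 3 * x ^ 2 / 8 - lam * x + lam ^ 2 / 2"

lemma P1: assumes "lam \<le> y/3" "y \<ge> 0" shows "Gd lam y \<ge> 7 * y^2 / 72"
proof -
  have "Gd lam y - 7*y^2/72 = (1/2) * (lam - y/3) * (lam - 5*y/3)" unfolding Gd_def by (simp add: algebra_simps power2_eq_square)
  also have "\<dots> \<ge> 0" using assms by (simp add: zero_le_mult_iff)
  finally show ?thesis by simp
qed

lemma P2: assumes "lam \<le> y/3" "y \<ge> 1" shows "y^3 * (3*y/4 - lam) \<le> 80 * (Gd lam y)^2"
proof (cases "lam \<ge> 0")
  case True
  have g: "Gd lam y \<ge> 7 * y^2 / 72" using P1 assms by auto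
  have "(7 * y^2/72)^2 \<le> (Gd lam y)^2" using g by (intro power_mono) auto
  moreover have "y^3 * (3*y/4 - lam) \<le> y^3*(3*y/4)" using True assms by (intro mult_left_mono) auto
  moreover have "80*(7*y^2/72)^2 = (245/324)*y^4" by (simp add: power2_eq_square power4_eq_xxxx)
  moreover have "y^3*(3*y/4) = 3/4*y^4" by (simp add: power3_eq_cube power4_eq_xxxx)
  moreover have "y^4 \<ge> 0" by simp
  ultimately show ?thesis by linarith
next
  case False
  define m where "m = - lam"
  have m: "m > 0" using False m_def by auto
  have "Gd lam y \<ge> y * (3*y/8 + m)" unfolding Gd_def m_def by (simp add: algebra_simps power2_eq_square)
  then have "(y * (3*y/8 + m))^2 \<le> (Gd lam y)^2" using m assms by (intro power_mono) auto
  moreover have "y^3 * (3*y/4 - lam) \<le> 16/3 * (y * (3*y/8 + m))^2"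
  proof -
    have "y^3 * (3*y/4 - lam) = y^3 * (3*y/4 + m)" by (simp add: m_def)
    also have "\<dots> \<le> 16/3 * (y*y*(3*y/8)*(3*y/8+m))" using m assms by (simp add: power3_eq_cube algebra_simps)
    also have "\<dots> \<le> 16/3 * (y * (3*y/8 + m))^2" using m assms
      by (simp add: power2_eq_square mult_left_mono mult_right_mono algebra_simps)
    finally show ?thesis .
  qed
  moreover have "(y * (3*y/8 + m))^2 \<ge> 0" by simp
  ultimately show ?thesis by linarith
qed

lemma P3: assumes "a \<le> y" "lam \<le> a/3" "a \<ge> 0" shows "Gd lam a \<le> Gd lam y"
proof -
  have "Gd lam y - Gd lam a = (y - a) * (3*(y+a)/8 - lam)" unfolding Gd_def by (simp add: field_simps power2_eq_square)
  also have "\<dots> \<ge> 0" using assms by (intro mult_nonneg_nonneg) auto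
  finally show ?thesis by simp
qed

lemma P4: assumes "a \<le> y" "lam \<le> a/3" "a \<ge> 0" shows "G lam y - G lam a \<ge> (y-a)^3/8"
proof -
  define t where "t = y - a"
  have t: "t \<ge> 0" using assms t_def by auto
  have yy: "y = a + t" using t_def by simp
  define Q where "Q = (y^2+y*a+a^2)/8 - lam*(y+a)/2 + lam^2/2"
  have e: "G lam y - G lam a = t * Q" unfolding G_def Q_def yy by (simp add: field_simps power2_eq_square power3_eq_cube)
  have q1: "Q - (a^2*7/72 + 5/24*a*t + t^2/8) = (lam - a/3)/2 * (lam + a/3 - (y+a))"
    unfolding Q_def yy by (simp add: field_simps power2_eq_square)
  have "(lam - a/3)/2 * (lam + a/3 - (y+a)) \<ge> 0" using assms t yy by (simp add: zero_le_mult_iff)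
  moreover have "a*t \<ge> 0" "a^2 \<ge> 0" using assms t by auto
  ultimately have "Q \<ge> t^2/8" using q1 by linarith
  then have "t * Q \<ge> t * (t^2/8)" using t by (intro mult_left_mono) auto
  then show ?thesis using e by (simp add: t_def power3_eq_cube power2_eq_square)
qed

lemma P5: fixes t r :: real assumes "t \<ge> 0" "r \<ge> 0" shows "r*t - t^3/16 \<le> r*(1+16*r)"
proof (cases "t \<le> 1 + 16*r")
  case True
  then have "r*t \<le> r*(1+16*r)" using assms by (intro mult_left_mono) auto
  moreover have "t^3/16 \<ge> 0" using assms by simp
  ultimately show ?thesis by linarith
next
  case False
  then have "t*t \<ge> 1*t" using assms by (intro mult_right_mono) auto
  then have "t^2 \<ge> 16*r" using False by (simp add: power2_eq_square)
  then have "t * t^2 \<ge> t*(16*r)" using assms by (intro mult_left_mono) auto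
  then have "t^3/16 \<ge> r*t" by (simp add: power3_eq_cube power2_eq_square algebra_simps)
  then show ?thesis using assms mult_nonneg_nonneg[of r "1+16*r"] by linarith
qed

lemma P6: fixes a y r :: real assumes "1 \<le> a" "a \<le> y" "r \<ge> 0" shows "y powr r \<le> a powr r * exp (r*(y-a))"
proof -
  have "y powr r = a powr r * (y/a) powr r" using powr_mult[of a "y/a" r] assms by simp
  also have "(y/a) powr r = exp (r * ln (y/a))" using assms by (simp add: powr_def)
  also have "ln (y/a) \<le> y - a"
  proof -
    have "ln (y/a) \<le> y/a - 1" using assms by (intro ln_le_minus_one) auto
    also have "y/a - 1 = (y-a)/a" using assms by (simp add: field_simps)
    also have "\<dots> \<le> y - a" using assms divide_left_mono[of 1 a "y-a"] by simp
    finally show ?thesis .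
  qed
  then have "exp (r * ln (y/a)) \<le> exp (r*(y-a))" using assms by (simp add: mult_left_mono)
  finally show ?thesis using assms by (simp add: mult_left_mono)
qed

lemma FTC_inf:
  fixes F h :: "real \<Rightarrow> real"
  assumes d: "\<And>x. x \<ge> a \<Longrightarrow> (F has_real_derivative h x) (at x)"
    and nn: "\<And>x. x \<ge> a \<Longrightarrow> h x \<ge> 0" and lim: "(F \<longlongrightarrow> T) at_top"
  shows "(h has_integral (T - F a)) {a..}"
proof (rule has_integral_to_inf)
  have I: "(h has_integral (F y - F a)) {a..y}" if "a \<le> y" for y
  proof (rule fundamental_theorem_of_calculus[OF that])
    fix x assume "x \<in> {a..y}"
    then have "x \<ge> a" by simp
    from d[OF this] have "(F has_real_derivative h x) (at x within {a..y})"
      by (rule has_field_derivative_at_within)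
    then show "(F has_vector_derivative h x) (at x within {a..y})"
      by (simp add: has_real_derivative_iff_has_vector_derivative)
  qed
  show "h integrable_on {a..y}" for y
  proof (cases "a \<le> y")
    case True show ?thesis by (rule has_integral_integrable[OF I[OF True]])
  next
    case False then have "{a..y} = {}" by simp
    then show ?thesis by (simp only: integrable_on_empty)
  qed
  have ev: "\<forall>\<^sub>F y in at_top. F y - F a = integral {a..y} h"
    by (rule eventually_mono[OF eventually_ge_at_top[of a]]) (rule integral_unique[OF I, symmetric])
  have "((\<lambda>y. F y - F a) \<longlongrightarrow> T - F a) at_top" using lim by (intro tendsto_intros)
  then show "((\<lambda>y. integral {a..y} h) \<longlongrightarrow> T - F a) at_top" using ev by (rule Lim_transform_eventually)
  show "\<And>y. a \<le> y \<Longrightarrow> 0 \<le> h y" by (rule nn)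
qed



lemma G_deriv: "(G lam has_real_derivative Gd lam x) (at x)"
  unfolding G_def Gd_def
  by (rule derivative_eq_intros refl | simp)+

lemma Gd_deriv: "(Gd lam has_real_derivative (3*x/4 - lam)) (at x)"
  unfolding Gd_def
  by (rule derivative_eq_intros refl | simp)+

lemma G_deriv_eq: "deriv (G lam) a = Gd lam a"
  by (rule DERIV_imp_deriv[OF G_deriv])

lemma exp_G_lim: "((\<lambda>y. exp (- G lam y / 2)) \<longlongrightarrow> 0) at_top"
  unfolding G_def by real_asymp

lemma cont_g: "continuous_on {a..} (\<lambda>y. y powr r * exp (- G lam y))" if "a > 0"
  using that unfolding G_def by (intro continuous_intros) auto


lemma Phi_deriv:
  assumes "y > 0" "Gd lam y \<noteq> 0"
  shows "((\<lambda>y. y powr r / Gd lam y * exp (- G lam y)) has_real_derivative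
     ((r * y powr (r-1) / Gd lam y - y powr r * (3*y/4 - lam) / (Gd lam y)^2) * exp (- G lam y)
      - y powr r * exp (- G lam y))) (at y)"
proof -
  have "((\<lambda>y. y powr r / Gd lam y * exp (- G lam y)) has_real_derivative
     ((r * y powr (r-1) * Gd lam y - y powr r * (3*y/4 - lam)) / (Gd lam y * Gd lam y) * exp (- G lam y)
      + exp (- G lam y) * (- Gd lam y) * (y powr r / Gd lam y))) (at y)"
    by (intro DERIV_mult DERIV_divide has_real_derivative_powr Gd_deriv DERIV_fun_exp DERIV_minus G_deriv assms)
  moreover have "(r * y powr (r-1) * Gd lam y - y powr r * (3*y/4 - lam)) / (Gd lam y * Gd lam y) * exp (- G lam y)
      + exp (- G lam y) * (- Gd lam y) * (y powr r / Gd lam y) =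
     (r * y powr (r-1) / Gd lam y - y powr r * (3*y/4 - lam) / (Gd lam y)^2) * exp (- G lam y)
      - y powr r * exp (- G lam y)"
    using assms by (simp add: field_simps power2_eq_square)
  ultimately show ?thesis by simp
qed



lemma main_bound:
  fixes r lam a :: real
  assumes r: "r \<ge> 0" and a1: "1 \<le> a" and la: "3*lam \<le> a"
  shows "(\<lambda>y. y powr r * exp (- G lam y)) integrable_on {a..} \<and>
    \<bar>integral {a..} (\<lambda>y. y powr r * exp (- G lam y)) - a powr r / Gd lam a * exp (- G lam a)\<bar>
    \<le> (2 * exp (r*(1+16*r)) * (11*r+80)) * \<bar>a powr r / Gd lam a * exp (- G lam a)\<bar> * (1 / a^3)"
proof -
  define g where "g = (\<lambda>y. y powr r * exp (- G lam y))"
  define M where "M = exp (r*(1+16*r))"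
  define E where "E = exp (- G lam a / 2)"
  define K0 where "K0 = M * a powr r * E / Gd lam a"
  define C where "C = 11*r+80"
  define K1 where "K1 = C / a^3 * K0"
  define w where "w = (\<lambda>y. Gd lam y * exp (- G lam y / 2))"
  define q where "q = (\<lambda>y. (r * y powr (r-1) / Gd lam y - y powr r * (3*y/4 - lam) / (Gd lam y)^2) * exp (- G lam y))"
  define \<Phi> where "\<Phi> = (\<lambda>y. y powr r / Gd lam y * exp (- G lam y))"
  define N where "N = a powr r / Gd lam a * exp (- G lam a)"
  have a0: "a > 0" using a1 by simp
  have lamy: "lam \<le> y/3" if "y \<ge> a" for y using that la by simp
  have Gdlow: "Gd lam y \<ge> 7*y^2/72" if "y \<ge> a" for y using P1[OF lamy[OF that]] that a1 by simp
  have Gdpos: "Gd lam y > 0" if "y \<ge> a" for y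
  proof -
    have "7*y^2/72 > 0" using that a1 by simp
    then show ?thesis using Gdlow[OF that] by linarith
  qed
  have Gda: "Gd lam a > 0" using Gdpos by simp
  have M0: "M > 0" and E0: "E > 0" unfolding M_def E_def by auto
  have K00: "K0 \<ge> 0" unfolding K0_def using M0 E0 Gda by simp
  have C0: "C \<ge> 0" unfolding C_def using r by simp
  have K10: "K1 \<ge> 0" unfolding K1_def using K00 C0 a0 by simp
  have g0: "g y \<ge> 0" for y unfolding g_def by simp
  have w0: "w y \<ge> 0" if "y \<ge> a" for y unfolding w_def using Gdpos[OF that] by simp
  have F1: "g y \<le> K0 * w y" if y: "y \<ge> a" for y
  proof -
    have "g y \<le> a powr r * exp (r*(y-a)) * exp (- G lam y)"
      unfolding g_def using P6[OF a1 y r] by (intro mult_right_mono) auto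
    also have "exp (r*(y-a)) \<le> M * exp ((G lam y - G lam a)/2)"
    proof -
      have "r*(y-a) \<le> r*(1+16*r) + (y-a)^3/16" using P5[of "y-a" r] y r by simp
      also have "(y-a)^3/16 \<le> (G lam y - G lam a)/2" using P4[OF y _ ] la a0 by simp
      finally have "exp (r*(y-a)) \<le> exp (r*(1+16*r) + (G lam y - G lam a)/2)" by simp
      then show ?thesis unfolding M_def by (simp add: exp_add)
    qed
    then have "a powr r * exp (r*(y-a)) * exp (- G lam y) \<le> a powr r * (M * exp ((G lam y - G lam a)/2)) * exp (- G lam y)"
      by (intro mult_right_mono mult_left_mono) auto
    also have "exp ((G lam y - G lam a)/2) * exp (- G lam y) = E * exp (- G lam y / 2)"
      unfolding E_def by (simp only: exp_add[symmetric]) (simp add: field_simps)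
    then have "a powr r * (M * exp ((G lam y - G lam a)/2)) * exp (- G lam y) = M * a powr r * E * exp (- G lam y / 2)"
      by (simp add: algebra_simps)
    also have "\<dots> \<le> M * a powr r * E * (Gd lam y / Gd lam a * exp (- G lam y / 2))"
    proof -
      have "1 \<le> Gd lam y / Gd lam a" using P3[OF y _ ] la a0 Gda by simp
      then have "exp (- G lam y / 2) \<le> Gd lam y / Gd lam a * exp (- G lam y / 2)"
        using mult_right_mono[of 1 "Gd lam y / Gd lam a" "exp (- G lam y / 2)"] by simp
      then show ?thesis using M0 E0 by (intro mult_left_mono) auto
    qed
    also have "\<dots> = K0 * w y" unfolding K0_def w_def by simp
    finally show ?thesis .
  qed
  have F2: "\<bar>q y\<bar> \<le> C / a^3 * g y" if y: "y \<ge> a" for y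
  proof -
    have y0: "y > 0" using y a0 by simp
    define \<rho> where "\<rho> = r / (y * Gd lam y) - (3*y/4 - lam) / (Gd lam y)^2"
    have "y powr (r-1) = y powr r / y" using y0 by (simp add: powr_diff)
    then have qe: "q y = \<rho> * g y" unfolding q_def \<rho>_def g_def by (simp add: field_simps)
    have Gy: "Gd lam y > 0" using Gdpos[OF y] .
    have t1: "r / (y * Gd lam y) \<le> 11*r / y^3"
    proof -
      have "y * Gd lam y \<ge> y * (7*y^2/72)" using Gdlow[OF y] y0 by (intro mult_left_mono) auto
      then have "7 * y^3 / 72 \<le> y * Gd lam y" by (simp add: power2_eq_square power3_eq_cube)
      then have "r / (y * Gd lam y) \<le> r / (7 * y^3 / 72)" using r y0 Gy by (intro divide_left_mono) auto
      also have "\<dots> = (72/7) * r / y^3" by simp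
      also have "\<dots> \<le> 11*r / y^3" using r y0 by (intro divide_right_mono) auto
      finally show ?thesis .
    qed
    have t2: "(3*y/4 - lam) / (Gd lam y)^2 \<le> 80 / y^3"
    proof -
      have "y^3 * (3*y/4 - lam) \<le> 80 * (Gd lam y)^2" using P2[OF lamy[OF y]] y a1 by simp
      then show ?thesis using y0 Gy by (simp add: field_simps)
    qed
    have n1: "r / (y * Gd lam y) \<ge> 0" using r y0 Gy by simp
    have n2: "(3*y/4 - lam) / (Gd lam y)^2 \<ge> 0" using lamy[OF y] y0 by simp
    have "\<bar>\<rho>\<bar> \<le> (11*r + 80) / y^3" unfolding \<rho>_def using t1 t2 n1 n2 by (simp add: add_divide_distrib)
    also have "\<dots> \<le> C / a^3" unfolding C_def using r a0 y by (intro divide_left_mono power_mono) auto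
    finally have "\<bar>\<rho>\<bar> \<le> C / a^3" .
    then have "\<bar>\<rho>\<bar> * g y \<le> C / a^3 * g y" using g0 by (intro mult_right_mono) auto
    then show ?thesis unfolding qe using g0 by (simp add: abs_mult)
  qed
  have F3: "\<bar>q y\<bar> \<le> K1 * w y" if y: "y \<ge> a" for y
  proof -
    have "C / a^3 * g y \<le> C / a^3 * (K0 * w y)" using F1[OF y] C0 a0 by (intro mult_left_mono) auto
    then show ?thesis using F2[OF y] unfolding K1_def by simp
  qed
  have limE: "((\<lambda>y. exp (- G lam y / 2)) \<longlongrightarrow> 0) at_top" by (rule exp_G_lim)
  have dE: "((\<lambda>y. -2 * exp (- G lam y / 2)) has_real_derivative w y) (at y)" for y
  proof -
    have "((\<lambda>y. -2 * exp (- G lam y / 2)) has_real_derivative -2 * (exp (- G lam y / 2) * (- Gd lam y / 2))) (at y)"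
      by (intro DERIV_cmult DERIV_fun_exp DERIV_cdivide DERIV_minus G_deriv)
    then show ?thesis unfolding w_def by (simp add: algebra_simps)
  qed
  have I1: "(w has_integral (2*E)) {a..}"
  proof -
    have lim: "((\<lambda>y. -2 * exp (- G lam y / 2)) \<longlongrightarrow> 0) at_top"
      using tendsto_mult[OF tendsto_const limE, of "-2"] by simp
    have "(w has_integral (0 - (-2 * exp (- G lam a / 2)))) {a..}"
      by (rule FTC_inf[OF dE w0 lim])
    then show ?thesis unfolding E_def by simp
  qed
  have limPhi: "(\<Phi> \<longlongrightarrow> 0) at_top"
  proof (rule tendsto_sandwich[of "\<lambda>_. 0" _ _ "\<lambda>y. K0 * exp (- G lam y / 2)"])
    show "\<forall>\<^sub>F y in at_top. 0 \<le> \<Phi> y"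
      by (rule eventually_mono[OF eventually_ge_at_top[of a]]) (use Gdpos in \<open>force simp: \<Phi>_def intro!: divide_nonneg_pos\<close>)
    show "\<forall>\<^sub>F y in at_top. \<Phi> y \<le> K0 * exp (- G lam y / 2)"
    proof (rule eventually_mono[OF eventually_ge_at_top[of a]])
      fix y assume y: "a \<le> y"
      have "\<Phi> y = g y / Gd lam y" unfolding \<Phi>_def g_def by simp
      also have "\<dots> \<le> K0 * w y / Gd lam y" using F1[OF y] Gdpos[OF y] by (intro divide_right_mono) auto
      also have "\<dots> = K0 * exp (- G lam y / 2)" unfolding w_def using Gdpos[OF y] by simp
      finally show "\<Phi> y \<le> K0 * exp (- G lam y / 2)" .
    qed
    show "((\<lambda>_. 0::real) \<longlongrightarrow> 0) at_top" by simp
    show "((\<lambda>y. K0 * exp (- G lam y / 2)) \<longlongrightarrow> 0) at_top"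
      using tendsto_mult[OF tendsto_const limE, of K0] by simp
  qed
  define F where "F = (\<lambda>y. - \<Phi> y + K1 * (-2 * exp (- G lam y / 2)))"
  have dF: "(F has_real_derivative ((g y - q y) + K1 * w y)) (at y)" if y: "y \<ge> a" for y
  proof -
    have y0: "y > 0" using y a0 by simp
    have "(\<Phi> has_real_derivative (q y - g y)) (at y)"
      unfolding \<Phi>_def q_def g_def using Phi_deriv[OF y0, of lam r] Gdpos[OF y] by simp
    then have "(F has_real_derivative (- (q y - g y) + K1 * w y)) (at y)"
      unfolding F_def by (intro DERIV_add DERIV_minus DERIV_cmult dE)
    then show ?thesis by simp
  qed
  have u0: "(g y - q y) + K1 * w y \<ge> 0" if y: "y \<ge> a" for y
    using F3[OF y] g0[of y] by linarith
  have limF: "(F \<longlongrightarrow> 0) at_top"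
  proof -
    have "(F \<longlongrightarrow> - 0 + K1 * (-2 * 0)) at_top"
      unfolding F_def by (intro tendsto_intros limPhi limE)
    then show ?thesis by simp
  qed
  have I2: "((\<lambda>y. (g y - q y) + K1 * w y) has_integral (0 - F a)) {a..}"
    by (rule FTC_inf[OF dF u0 limF])
  have I3: "((\<lambda>y. K1 * w y) has_integral (K1 * (2*E))) {a..}"
    by (rule has_integral_mult_right[OF I1])
  have I4: "((\<lambda>y. g y - q y) has_integral (\<Phi> a)) {a..}"
  proof -
    have "((\<lambda>y. ((g y - q y) + K1 * w y) - K1 * w y) has_integral ((0 - F a) - K1 * (2*E))) {a..}"
      by (rule has_integral_diff[OF I2 I3])
    moreover have "(0 - F a) - K1 * (2*E) = \<Phi> a" unfolding F_def E_def by simp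
    ultimately show ?thesis by simp
  qed
  have gint: "g integrable_on {a..}"
  proof (rule measurable_bounded_by_integrable_imp_integrable)
    show "g \<in> borel_measurable (lebesgue_on {a..})"
      unfolding g_def by (rule continuous_imp_measurable_on_sets_lebesgue[OF cont_g[OF a0]]) simp
    show "(\<lambda>y. K0 * w y) integrable_on {a..}" using has_integral_mult_right[OF I1, of K0] by blast
    show "norm (g x) \<le> K0 * w x" if "x \<in> {a..}" for x using F1 that g0[of x] by simp
    show "{a..} \<in> sets lebesgue" by simp
  qed
  have qint: "q integrable_on {a..}"
  proof -
    have "(\<lambda>y. g y - (g y - q y)) integrable_on {a..}"
      by (rule integrable_diff[OF gint]) (use I4 in blast)
    then show ?thesis by simp
  qed
  have qeq: "integral {a..} q = integral {a..} g - \<Phi> a"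
  proof -
    have "integral {a..} (\<lambda>y. g y - q y) = integral {a..} g - integral {a..} q"
      by (rule integral_diff[OF gint qint])
    moreover have "integral {a..} (\<lambda>y. g y - q y) = \<Phi> a" using I4 by (rule integral_unique)
    ultimately show ?thesis by simp
  qed
  have qb: "norm (integral {a..} q) \<le> integral {a..} (\<lambda>y. K1 * w y)"
    by (rule integral_norm_bound_integral[OF qint]) (use I3 F3 in auto)
  have i3: "integral {a..} (\<lambda>y. K1 * w y) = K1 * (2*E)" using I3 by (rule integral_unique)
  have "\<Phi> a = N" unfolding N_def \<Phi>_def by simp
  then have "norm (integral {a..} q) = \<bar>integral {a..} g - N\<bar>" using qeq by simp
  then have qb2: "\<bar>integral {a..} g - N\<bar> \<le> K1 * (2*E)"
    using qb i3 by linarith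
  have N0: "N \<ge> 0" unfolding N_def using Gda by simp
  have EE: "E * E = exp (- G lam a)" unfolding E_def by (simp only: exp_add[symmetric]) simp
  have "K1 * (2*E) = (2 * M * C) * N * (1/a^3)"
    unfolding K1_def K0_def N_def using Gda a0 EE[symmetric] by (simp add: field_simps)
  then have "\<bar>integral {a..} g - N\<bar> \<le> (2 * M * C) * \<bar>N\<bar> * (1/a^3)" using qb2 N0 by simp
  then show ?thesis using gint unfolding g_def N_def M_def C_def by simp
qed


theorem lemma5p2:
  fixes r :: real
  assumes "r \<ge> 0"
  shows "\<exists>C. \<forall>lam a. a \<ge> max 1 (3 * lam) \<longrightarrow>
           (\<lambda>y. y powr r * exp (- G lam y)) integrable_on {a..} \<and>
           \<bar>integral {a..} (\<lambda>y. y powr r * exp (- G lam y))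
              - a powr r / deriv (G lam) a * exp (- G lam a)\<bar>
           \<le> C * \<bar>a powr r / deriv (G lam) a * exp (- G lam a)\<bar> * (1 / a ^ 3)"
proof (intro exI allI impI)
  fix lam a :: real
  assume "a \<ge> max 1 (3 * lam)"
  then have "1 \<le> a" "3*lam \<le> a" by auto
  from main_bound[OF assms this]
  show "(\<lambda>y. y powr r * exp (- G lam y)) integrable_on {a..} \<and>
           \<bar>integral {a..} (\<lambda>y. y powr r * exp (- G lam y))
              - a powr r / deriv (G lam) a * exp (- G lam a)\<bar>
           \<le> (2 * exp (r*(1+16*r)) * (11*r+80)) * \<bar>a powr r / deriv (G lam) a * exp (- G lam a)\<bar> * (1 / a ^ 3)"
    by (simp only: G_deriv_eq)
qed

end
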